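(* Consider Phases 0 and 1 of the Source Filter protocol, run in the noisy $\mathcal{PULL}(h)$ model with alphabet $\{0,1\}$ and $\delta$-uniform noise with $\delta\in[0,1/2)$. Assume the parameter $m$ satisfies $$m\ge c_1\left(\frac{n\delta\log n}{\min\{s^2,n\}(1-2\delta)^2}+\frac{\sqrt n\log n}{s}+\frac{(s_0+s_1)\log n}{s^2}+h\log n\right)$$ for a sufficiently large absolute constant $c_1$, and that $s_1>s_0$. Then, for every agent $i$, the weak-opinion $\tilde Y^{(i)}$ computed at the end of Phase 1 satisfies $$\Pr(\tilde Y^{(i)}=1)\ge\frac12+4\sqrt{\frac{\log n}{n}}.$$ Moreover, the weak-opinions $\{\tilde Y^{(i)}\}_{i\in I}$ are mutually independent.
   Context: Agents are $I=\{1,\dots,n\}$. Some agents are sources, each with a preference in $\{0,1\}$; $s_1$ (resp. $s_0$) sources have preference $1$ (resp. $0$), with $s_0,s_1\le n/4$ and $s=|s_1-s_0|\ge1$. Noisy $\mathcal{PULL}(h)$ model: in each synchronous round, every agent displays a message in $\{0,1\}$. Every agent then samples $h$ agents independently and uniformly at random from $I$, with replacement. For each sampled agent, it observes the displayed message, flipped independently with probability $\delta$ (this is $\delta$-uniform noise on $\{0,1\}$). All sampling, noise and private coins are mutually independent. Source Filter, Phases 0 and 1 (all agents start simultaneously): - Phase 0 lasts $\lceil m/h\rceil$ rounds. Non-source agents display $0$ and sources display their preference. Each agent lets $\mathrm{Counter}_1$ be the number of received messages equal to $1$ during Phase 0. - Phase 1 lasts the next $\lceil m/h\rceil$ rounds.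 Non-source agents display $1$ and sources display their preference. Each agent lets $\mathrm{Counter}_0$ be the number of received messages equal to $0$ during Phase 1. - At the end of Phase 1, agent $i$ sets its weak-opinion $\tilde Y^{(i)}=1$ if $\mathrm{Counter}_1>\mathrm{Counter}_0$, $\tilde Y^{(i)}=0$ if $\mathrm{Counter}_1<\mathrm{Counter}_0$, and $\tilde Y^{(i)}$ equal to an independent fair coin if they are equal. *)

theory Defs
  imports "HOL-Probability.Probability"
begin

(* Agents are 1..n.  Messages are bool (True = 1, False = 0).
   S1 = set of sources with preference 1, S0 = set of sources with preference 0. *)

definition phase_len :: "nat \<Rightarrow> nat \<Rightarrow> nat" where
  "phase_len m h = nat \<lceil>real m / real h\<rceil>"

definition display0 :: "nat set \<Rightarrow> nat set \<Rightarrow> nat \<Rightarrow> bool" where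
  "display0 S0 S1 j = (if j \<in> S1 then True else if j \<in> S0 then False else False)"

definition display1 :: "nat set \<Rightarrow> nat set \<Rightarrow> nat \<Rightarrow> bool" where
  "display1 S0 S1 j = (if j \<in> S1 then True else if j \<in> S0 then False else True)"

definition noisy_sample :: "nat \<Rightarrow> real \<Rightarrow> (nat \<times> bool) pmf" where
  "noisy_sample n \<delta> = pair_pmf (pmf_of_set {1..n}) (bernoulli_pmf \<delta>)"

definition observe :: "(nat \<Rightarrow> bool) \<Rightarrow> nat \<times> bool \<Rightarrow> bool" where
  "observe disp s = (if snd s then \<not> disp (fst s) else disp (fst s))"

(* Private randomness of one agent: the pulls of Phase 0 indexed by (round, sample) in
   {..<R} x {..<h}, the pulls of Phase 1 indexed likewise, and a fair tie-breaking coin. *)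
type_synonym agent_coins = "((nat \<times> nat) \<Rightarrow> (nat \<times> bool)) \<times> ((nat \<times> nat) \<Rightarrow> (nat \<times> bool)) \<times> bool"

definition agent_pmf :: "nat \<Rightarrow> real \<Rightarrow> nat \<Rightarrow> nat \<Rightarrow> agent_coins pmf" where
  "agent_pmf n \<delta> h R =
     pair_pmf (Pi_pmf ({..<R} \<times> {..<h}) undefined (\<lambda>_. noisy_sample n \<delta>))
       (pair_pmf (Pi_pmf ({..<R} \<times> {..<h}) undefined (\<lambda>_. noisy_sample n \<delta>))
                 (bernoulli_pmf (1/2)))"

definition source_filter_pmf :: "nat \<Rightarrow> real \<Rightarrow> nat \<Rightarrow> nat \<Rightarrow> (nat \<Rightarrow> agent_coins) pmf" where
  "source_filter_pmf n \<delta> h R = Pi_pmf {1..n} undefined (\<lambda>_. agent_pmf n \<delta> h R)"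

definition counter1 :: "nat set \<Rightarrow> nat set \<Rightarrow> nat \<Rightarrow> nat \<Rightarrow> agent_coins \<Rightarrow> nat" where
  "counter1 S0 S1 h R c =
     card {rk \<in> {..<R} \<times> {..<h}. observe (display0 S0 S1) (fst c rk) = True}"

definition counter0 :: "nat set \<Rightarrow> nat set \<Rightarrow> nat \<Rightarrow> nat \<Rightarrow> agent_coins \<Rightarrow> nat" where
  "counter0 S0 S1 h R c =
     card {rk \<in> {..<R} \<times> {..<h}. observe (display1 S0 S1) (fst (snd c) rk) = False}"

definition weak_opinion :: "nat set \<Rightarrow> nat set \<Rightarrow> nat \<Rightarrow> nat \<Rightarrow> agent_coins \<Rightarrow> bool" where
  "weak_opinion S0 S1 h R c =
     (if counter1 S0 S1 h R c > counter0 S0 S1 h R c then True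
      else if counter1 S0 S1 h R c < counter0 S0 S1 h R c then False
      else snd (snd c))"

end

theory Submission
  imports Defs
begin

definition bw :: "nat \<Rightarrow> real \<Rightarrow> nat \<Rightarrow> real" where
  "bw n p k = real (n choose k) * p^k * (1-p)^(n-k)"

definition bE :: "nat \<Rightarrow> real \<Rightarrow> (nat \<Rightarrow> real) \<Rightarrow> real" where
  "bE n p f = (\<Sum>k\<le>n. bw n p k * f k)"

lemma bE_expectation:
  assumes "p \<in> {0..1}"
  shows "bE n p f = measure_pmf.expectation (binomial_pmf n p) f"
  using assms by (simp add: expectation_binomial_pmf' bE_def bw_def)

lemma bE_Suc:
  assumes p: "p \<in> {0..1}"
  shows "bE (Suc n) p f = p * bE n p (\<lambda>k. f (Suc k)) + (1-p) * bE n p f"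
proof -
  have "bE (Suc n) p f = measure_pmf.expectation (bernoulli_pmf p \<bind>
           (\<lambda>b. binomial_pmf n p \<bind> (\<lambda>k. return_pmf ((if b then 1 else 0) + k)))) f"
    using p by (simp add: bE_expectation binomial_pmf_Suc)
  also have "\<dots> = (\<Sum>b\<in>UNIV. pmf (bernoulli_pmf p) b *\<^sub>R
       measure_pmf.expectation (binomial_pmf n p \<bind> (\<lambda>k. return_pmf ((if b then 1 else 0) + k))) f)"
    by (rule pmf_expectation_bind) (use p in \<open>auto simp: map_pmf_def[symmetric] intro!: finite_imageI finite_set_pmf_binomial_pmf\<close>)
  also have "\<dots> = p * bE n p (\<lambda>k. f (Suc k)) + (1-p) * bE n p f"
    using p by (simp add: UNIV_bool map_pmf_def[symmetric] bE_expectation)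
  finally show ?thesis .
qed

lemma bE_one: "p \<in> {0..1} \<Longrightarrow> bE n p (\<lambda>_. 1) = 1"
  by (induction n) (auto simp: bE_Suc, simp add: bE_def bw_def)

lemma bE_lin: "bE n p (\<lambda>k. a * f k + b * g k) = a * bE n p f + b * bE n p g"
  by (simp add: bE_def sum.distrib sum_distrib_left algebra_simps)

lemma bE_poly:
  assumes "p \<in> {0..1}"
  shows "bE n p (\<lambda>k. a0 + a1 * W k + a2 * W k ^ 2 + a3 * W k ^ 3 + a4 * W k ^ 4) =
     a0 + a1 * bE n p W + a2 * bE n p (\<lambda>k. W k ^ 2) + a3 * bE n p (\<lambda>k. W k ^ 3)
       + a4 * bE n p (\<lambda>k. W k ^ 4)"
proof -
  have "bE n p (\<lambda>_. a0) = a0" using bE_one[OF assms, of n] bE_lin[of n p a0 "\<lambda>_. 1" 0 "\<lambda>_. 1"]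
    by simp
  then show ?thesis
    by (simp add: bE_def sum.distrib sum_distrib_left algebra_simps)
qed

lemma bE_cong: "(\<And>k. k \<le> n \<Longrightarrow> f k = g k) \<Longrightarrow> bE n p f = bE n p g"
  by (simp add: bE_def)

lemma bE_Suc_shift:
  assumes p: "p \<in> {0..1}" and W: "W = (\<lambda>k. real k - real n * p)"
  shows "bE (Suc n) p (\<lambda>k. P (real k - real (Suc n) * p)) =
         p * bE n p (\<lambda>k. P (W k + (1-p))) + (1-p) * bE n p (\<lambda>k. P (W k + - p))"
proof -
  have e1: "(\<lambda>k. P (real (Suc k) - real (Suc n) * p)) = (\<lambda>k. P (W k + (1-p)))"
    by (rule ext) (simp add: algebra_simps W)
  have e2: "(\<lambda>k. P (real k - real (Suc n) * p)) = (\<lambda>k. P (W k + - p))"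
    by (rule ext) (simp add: algebra_simps W)
  show ?thesis using bE_Suc[OF p, of n "\<lambda>k. P (real k - real (Suc n) * p)"] e1 e2 by simp
qed

lemma bE_pow_shift:
  assumes p: "p \<in> {0..1}"
  shows "bE n p (\<lambda>k. (W k + c) ^ 4) = c^4 + 4*c^3 * bE n p W + 6*c^2 * bE n p (\<lambda>k. W k ^ 2)
            + 4*c * bE n p (\<lambda>k. W k ^ 3) + 1 * bE n p (\<lambda>k. W k ^ 4)" (is ?A)
    and "bE n p (\<lambda>k. (W k + c) ^ 3) = c^3 + 3*c^2 * bE n p W + 3*c * bE n p (\<lambda>k. W k ^ 2)
            + 1 * bE n p (\<lambda>k. W k ^ 3) + 0 * bE n p (\<lambda>k. W k ^ 4)" (is ?B)
    and "bE n p (\<lambda>k. (W k + c) ^ 2) = c^2 + 2*c * bE n p W + 1 * bE n p (\<lambda>k. W k ^ 2)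
            + 0 * bE n p (\<lambda>k. W k ^ 3) + 0 * bE n p (\<lambda>k. W k ^ 4)" (is ?C)
    and "bE n p (\<lambda>k. (W k + c)) = c + 1 * bE n p W + 0 * bE n p (\<lambda>k. W k ^ 2)
            + 0 * bE n p (\<lambda>k. W k ^ 3) + 0 * bE n p (\<lambda>k. W k ^ 4)" (is ?D)
proof -
  have "bE n p (\<lambda>k. (W k + c) ^ 4) = bE n p (\<lambda>k. c^4 + (4*c^3) * W k + (6*c^2) * W k ^ 2 + (4*c) * W k ^ 3 + 1 * W k ^ 4)"
    by (rule bE_cong) (simp add: algebra_simps power2_eq_square power3_eq_cube power4_eq_xxxx)
  also note bE_poly[OF p]
  finally show ?A .
  have "bE n p (\<lambda>k. (W k + c) ^ 3) = bE n p (\<lambda>k. c^3 + (3*c^2) * W k + (3*c) * W k ^ 2 + 1 * W k ^ 3 + 0 * W k ^ 4)"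
    by (rule bE_cong) (simp add: algebra_simps power2_eq_square power3_eq_cube)
  also note bE_poly[OF p]
  finally show ?B .
  have "bE n p (\<lambda>k. (W k + c) ^ 2) = bE n p (\<lambda>k. c^2 + (2*c) * W k + 1 * W k ^ 2 + 0 * W k ^ 3 + 0 * W k ^ 4)"
    by (rule bE_cong) (simp add: algebra_simps power2_eq_square)
  also note bE_poly[OF p]
  finally show ?C .
  have "bE n p (\<lambda>k. (W k + c)) = bE n p (\<lambda>k. c + 1 * W k + 0 * W k ^ 2 + 0 * W k ^ 3 + 0 * W k ^ 4)"
    by (rule bE_cong) (simp add: algebra_simps)
  also note bE_poly[OF p]
  finally show ?D .
qed

lemma moms:
  assumes p: "p \<in> {0..1}"
  shows "bE n p (\<lambda>k. real k - real n * p) = 0 \<and>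
         bE n p (\<lambda>k. (real k - real n * p)^2) = n * p * (1-p) \<and>
         bE n p (\<lambda>k. (real k - real n * p)^3) = n * p * (1-p) * (1 - 2*p) \<and>
         bE n p (\<lambda>k. (real k - real n * p)^4) = n * p * (1-p) + 3 * n * (n - 2) * p^2 * (1-p)^2"
proof (induction n)
  case 0 then show ?case using p by (simp add: bE_def bw_def)
next
  case (Suc n)
  define W where "W = (\<lambda>k. real k - real n * p)"
  have IH: "bE n p W = 0" "bE n p (\<lambda>k. W k ^ 2) = n * p * (1-p)"
     "bE n p (\<lambda>k. W k ^ 3) = n * p * (1-p) * (1 - 2*p)"
     "bE n p (\<lambda>k. W k ^ 4) = n * p * (1-p) + 3 * n * (real n - 2) * p^2 * (1-p)^2"
    using Suc unfolding W_def by auto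
  have S1: "bE (Suc n) p (\<lambda>k. real k - real (Suc n) * p) = p * bE n p (\<lambda>k. W k + (1-p)) + (1-p) * bE n p (\<lambda>k. W k + - p)"
    using bE_Suc_shift[OF p W_def, where P = "\<lambda>x. x"] by simp
  have S2: "bE (Suc n) p (\<lambda>k. (real k - real (Suc n) * p)^2) = p * bE n p (\<lambda>k. (W k + (1-p))^2) + (1-p) * bE n p (\<lambda>k. (W k + - p)^2)"
    using bE_Suc_shift[OF p W_def, where P = "\<lambda>x. x^2"] by simp
  have S3: "bE (Suc n) p (\<lambda>k. (real k - real (Suc n) * p)^3) = p * bE n p (\<lambda>k. (W k + (1-p))^3) + (1-p) * bE n p (\<lambda>k. (W k + - p)^3)"
    using bE_Suc_shift[OF p W_def, where P = "\<lambda>x. x^3"] by simp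
  have S4: "bE (Suc n) p (\<lambda>k. (real k - real (Suc n) * p)^4) = p * bE n p (\<lambda>k. (W k + (1-p))^4) + (1-p) * bE n p (\<lambda>k. (W k + - p)^4)"
    using bE_Suc_shift[OF p W_def, where P = "\<lambda>x. x^4"] by simp
  note sh = bE_pow_shift[OF p, of n W]
  show ?case
    unfolding S1 S2 S3 S4 sh IH
    by (simp add: algebra_simps power2_eq_square power3_eq_cube power4_eq_xxxx)
qed

definition E2 :: "nat \<Rightarrow> real \<Rightarrow> real \<Rightarrow> (nat \<Rightarrow> nat \<Rightarrow> real) \<Rightarrow> real" where
  "E2 N p1 p0 F = (\<Sum>u\<le>N. \<Sum>v\<le>N. bw N p1 u * bw N p0 v * F u v)"

lemma E2_outer: "E2 N p1 p0 F = bE N p0 (\<lambda>v. bE N p1 (\<lambda>u. F u v))"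
  unfolding E2_def bE_def
  by (subst sum.swap) (simp add: sum_distrib_left sum_distrib_right algebra_simps)

lemma bw_nonneg: "p \<in> {0..1} \<Longrightarrow> bw n p k \<ge> 0"
  by (simp add: bw_def)

lemma E2_mono: "p1 \<in> {0..1} \<Longrightarrow> p0 \<in> {0..1} \<Longrightarrow> (\<And>u v. u \<le> N \<Longrightarrow> v \<le> N \<Longrightarrow> F u v \<le> G u v) \<Longrightarrow>
   E2 N p1 p0 F \<le> E2 N p1 p0 G"
  unfolding E2_def
  by (intro sum_mono mult_left_mono) (auto intro!: mult_nonneg_nonneg bw_nonneg)

lemma E2_lin: "E2 N p1 p0 (\<lambda>u v. a * F u v + b * G u v) = a * E2 N p1 p0 F + b * E2 N p1 p0 G"
  unfolding E2_def by (simp add: sum.distrib sum_distrib_left algebra_simps)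

lemma E2_const: "p1 \<in> {0..1} \<Longrightarrow> p0 \<in> {0..1} \<Longrightarrow> E2 N p1 p0 (\<lambda>u v. c) = c"
  unfolding E2_outer using bE_one bE_lin[of N _ c "\<lambda>_. 1" 0 "\<lambda>_. 1"] by simp

lemma bE_neg_pow:
  "bE n p (\<lambda>k. (- W k) ^ 2) = bE n p (\<lambda>k. W k ^ 2)"
  "bE n p (\<lambda>k. (- W k) ^ 3) = - bE n p (\<lambda>k. W k ^ 3)"
  "bE n p (\<lambda>k. (- W k) ^ 4) = bE n p (\<lambda>k. W k ^ 4)"
  "bE n p (\<lambda>k. (- W k)) = - bE n p W"
  by (simp_all add: bE_def sum_negf[symmetric])

lemma E2_moments:
  fixes N :: nat and p1 p0 :: real
  assumes p1: "p1 \<in> {0..1}" and p0: "p0 \<in> {0..1}"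
  defines "V1 \<equiv> N * p1 * (1-p1)" and "V0 \<equiv> N * p0 * (1-p0)" and "\<mu> \<equiv> N * (p1 - p0)"
  shows "E2 N p1 p0 (\<lambda>u v. (real u - real v)^2) = V1 + V0 + \<mu>^2"
    and "E2 N p1 p0 (\<lambda>u v. (real u - real v)^4) =
          (V1 + 3 * N * (real N - 2) * p1^2 * (1-p1)^2) + (V0 + 3 * N * (real N - 2) * p0^2 * (1-p0)^2)
          + 6 * V1 * V0 + 6 * \<mu>^2 * (V1 + V0) + 4 * \<mu> * (V1 * (1 - 2*p1) - V0 * (1 - 2*p0)) + \<mu>^4"
proof -
  define W1 where "W1 = (\<lambda>k. real k - real N * p1)"
  define W0 where "W0 = (\<lambda>k. real k - real N * p0)"
  define c where "c = (\<lambda>v. - W0 v + \<mu>)"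
  have cv: "real u - real v = W1 u + c v" for u v
    unfolding W1_def c_def W0_def \<mu>_def by (simp add: algebra_simps)
  have m1: "bE N p1 W1 = 0" "bE N p1 (\<lambda>k. W1 k ^ 2) = N * p1 * (1-p1)"
     "bE N p1 (\<lambda>k. W1 k ^ 3) = N * p1 * (1-p1) * (1 - 2*p1)"
     "bE N p1 (\<lambda>k. W1 k ^ 4) = N * p1 * (1-p1) + 3 * N * (real N - 2) * p1^2 * (1-p1)^2"
    using moms[OF p1, of N] unfolding W1_def by auto
  have m0: "bE N p0 W0 = 0" "bE N p0 (\<lambda>k. W0 k ^ 2) = N * p0 * (1-p0)"
     "bE N p0 (\<lambda>k. W0 k ^ 3) = N * p0 * (1-p0) * (1 - 2*p0)"
     "bE N p0 (\<lambda>k. W0 k ^ 4) = N * p0 * (1-p0) + 3 * N * (real N - 2) * p0^2 * (1-p0)^2"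
    using moms[OF p0, of N] unfolding W0_def by auto
  have c1: "bE N p0 c = \<mu>" using bE_pow_shift(4)[OF p0, of N "\<lambda>v. - W0 v" \<mu>] m0
    unfolding c_def bE_neg_pow by simp
  have c2: "bE N p0 (\<lambda>v. c v ^ 2) = V0 + \<mu>^2" using bE_pow_shift(3)[OF p0, of N "\<lambda>v. - W0 v" \<mu>] m0
    unfolding c_def bE_neg_pow V0_def by simp
  have c4: "bE N p0 (\<lambda>v. c v ^ 4) = \<mu>^4 + 6*\<mu>^2 * V0 - 4*\<mu> * (V0 * (1 - 2*p0))
       + (V0 + 3 * N * (real N - 2) * p0^2 * (1-p0)^2)"
    using bE_pow_shift(1)[OF p0, of N "\<lambda>v. - W0 v" \<mu>] m0
    unfolding c_def bE_neg_pow V0_def by simp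
  have "E2 N p1 p0 (\<lambda>u v. (real u - real v)^2) = bE N p0 (\<lambda>v. bE N p1 (\<lambda>u. (W1 u + c v)^2))"
    unfolding E2_outer cv ..
  also have "\<dots> = bE N p0 (\<lambda>v. c v ^ 2 + V1)"
    using bE_pow_shift(3)[OF p1, of N W1] m1 unfolding V1_def by simp
  also have "\<dots> = V1 + V0 + \<mu>^2"
    using bE_lin[of N p0 1 "\<lambda>v. c v ^ 2" V1 "\<lambda>_. 1"] bE_one[OF p0] c2 by simp
  finally show "E2 N p1 p0 (\<lambda>u v. (real u - real v)^2) = V1 + V0 + \<mu>^2" .
  have "E2 N p1 p0 (\<lambda>u v. (real u - real v)^4) = bE N p0 (\<lambda>v. bE N p1 (\<lambda>u. (W1 u + c v)^4))"
    unfolding E2_outer cv ..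
  also have "\<dots> = bE N p0 (\<lambda>v. (V1 + 3 * N * (real N - 2) * p1^2 * (1-p1)^2) + (4 * (V1 * (1 - 2*p1))) * c v
       + (6 * V1) * c v ^ 2 + 0 * c v ^ 3 + 1 * c v ^ 4)"
    by (rule bE_cong) (simp only: bE_pow_shift(1)[OF p1] m1 V1_def, simp add: algebra_simps)
  also have "\<dots> = (V1 + 3 * N * (real N - 2) * p1^2 * (1-p1)^2) + (4 * (V1 * (1 - 2*p1))) * \<mu>
       + (6 * V1) * (V0 + \<mu>^2) + bE N p0 (\<lambda>v. c v ^ 4)"
    unfolding bE_poly[OF p0] c1 c2 by simp
  also have "\<dots> = (V1 + 3 * N * (real N - 2) * p1^2 * (1-p1)^2) + (V0 + 3 * N * (real N - 2) * p0^2 * (1-p0)^2)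
          + 6 * V1 * V0 + 6 * \<mu>^2 * (V1 + V0) + 4 * \<mu> * (V1 * (1 - 2*p1) - V0 * (1 - 2*p0)) + \<mu>^4"
    unfolding c4 by (simp add: algebra_simps)
  finally show "E2 N p1 p0 (\<lambda>u v. (real u - real v)^4) =
          (V1 + 3 * N * (real N - 2) * p1^2 * (1-p1)^2) + (V0 + 3 * N * (real N - 2) * p0^2 * (1-p0)^2)
          + 6 * V1 * V0 + 6 * \<mu>^2 * (V1 + V0) + 4 * \<mu> * (V1 * (1 - 2*p1) - V0 * (1 - 2*p0)) + \<mu>^4" .
qed

lemma swap_ratio:
  assumes p1: "0 < p1" "p1 < 1" and p0: "0 \<le> p0" "p0 < 1" and vu: "v \<le> u"
  shows "bw N p1 v * bw N p0 u = (p0*(1-p1)/(p1*(1-p0)))^(u-v) * (bw N p1 u * bw N p0 v)"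
proof (cases "u \<le> N")
  case False
  then show ?thesis by (simp add: bw_def)
next
  case True
  obtain j where u: "u = v + j" using vu le_Suc_ex by blast
  have Nv: "N - v = (N - u) + j" using True u by simp
  have q1: "1 - p1 > 0" using p1 by simp
  have q0: "1 - p0 > 0" using p0 by simp
  show ?thesis
    unfolding bw_def Nv u using p1 q1 q0
    by (simp only: power_add power_divide power_mult_distrib) (simp add: field_simps)
qed

lemma pow_bernoulli_aux:
  fixes t :: real and j :: nat
  assumes "0 \<le> t" "t \<le> 1"
  shows "(1-t)^j * (1 + t * j) \<le> 1"
proof (induction j)
  case 0 then show ?case by simp
next
  case (Suc j)
  have a: "(1-t) * (1 + t * Suc j) \<le> 1 + t * j"
    using assms by (simp add: algebra_simps)
  have "(1-t)^Suc j * (1 + t * Suc j) = (1-t)^j * ((1-t) * (1 + t * Suc j))" by simp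
  also have "\<dots> \<le> (1-t)^j * (1 + t * j)"
    using a assms by (intro mult_left_mono) auto
  finally show ?case using Suc by linarith
qed

lemma one_minus_pow:
  fixes t r :: real and j :: nat
  assumes t: "0 \<le> t" "t \<le> 1" and r: "0 \<le> r" "r \<le> 1 - t"
  shows "1 - r^j \<ge> min 1 (t * j) / 2"
proof -
  have "r^j \<le> (1-t)^j" using r by (intro power_mono) auto
  moreover have "(1-t)^j * (1 + t * j) \<le> 1" by (rule pow_bernoulli_aux[OF t])
  moreover have pos: "1 + t * j > 0" using t by (simp add: add_pos_nonneg)
  ultimately have "r^j * (1 + t * j) \<le> 1"
    using pos by (meson order_trans mult_right_mono less_imp_le)
  then have "r^j \<le> 1 / (1 + t * j)" using pos by (simp add: field_simps)
  then have "1 - r^j \<ge> t * j / (1 + t * j)" using pos by (simp add: field_simps)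
  moreover have "x / (1 + x) \<ge> min 1 x / 2" if "x \<ge> 0" for x :: real
    using that by (cases "x \<le> 1") (simp_all add: field_simps mult_left_le)
  then have "t * j / (1 + t * j) \<ge> min 1 (t * j) / 2" using t by simp
  ultimately show ?thesis by linarith
qed

lemma r_bounds:
  fixes p0 p1 :: real
  assumes "0 \<le> p0" "p0 < p1" "p1 \<le> 1/2"
  shows "0 \<le> p0*(1-p1)/(p1*(1-p0))" "p0*(1-p1)/(p1*(1-p0)) \<le> 1 - (p1-p0)/p1"
    "0 \<le> (p1-p0)/p1" "(p1-p0)/p1 \<le> 1"
proof -
  have "p0*(1-p1)/(p1*(1-p0)) = (p0/p1) * ((1-p1)/(1-p0))" by (rule times_divide_times_eq[symmetric])
  also have "\<dots> \<le> (p0/p1) * 1"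
    using assms by (intro mult_left_mono) auto
  also have "\<dots> = 1 - (p1-p0)/p1" using assms by (simp add: field_simps)
  finally show "p0*(1-p1)/(p1*(1-p0)) \<le> 1 - (p1-p0)/p1" .
  show "0 \<le> p0*(1-p1)/(p1*(1-p0))" using assms by simp
  show "0 \<le> (p1-p0)/p1" using assms by simp
  show "(p1-p0)/p1 \<le> 1" using assms by simp
qed

lemma pointwise_sym:
  fixes N u v :: nat and p0 p1 t :: real
  assumes a: "0 \<le> p0" "p0 < p1" "p1 \<le> 1/2" and t: "t = (p1-p0)/p1"
  defines "w \<equiv> (\<lambda>u v. bw N p1 u * bw N p0 v)"
  shows "(w u v - w v u) * (if u > v then 1 else if u < v then -1 else 0)
          \<ge> (w u v + w v u) * (min 1 (t * \<bar>real u - real v\<bar>) / 4)"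
proof -
  define r where "r = p0*(1-p1)/(p1*(1-p0))"
  have p1: "0 < p1" "p1 < 1" and p0: "0 \<le> p0" "p0 < 1" using a by auto
  note rb = r_bounds[OF a, folded r_def t]
  have wnn: "w x y \<ge> 0" for x y unfolding w_def
    using p1 p0 by (intro mult_nonneg_nonneg bw_nonneg) auto
  have key: "w x y * (1 - r^(x-y)) \<ge> (w x y + w y x) * (min 1 (t * \<bar>real x - real y\<bar>) / 4)"
    if "y < x" for x y
  proof -
    have wyx: "w y x = r^(x-y) * w x y"
      unfolding w_def r_def using swap_ratio[OF p1 p0, of y x N] that by simp
    have abs: "\<bar>real x - real y\<bar> = real (x - y)" using that by simp
    have rj: "r^(x-y) \<le> 1" using rb by (intro power_le_one) auto
    have rj0: "r^(x-y) \<ge> 0" using rb by simp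
    have om: "1 - r^(x-y) \<ge> min 1 (t * real (x-y)) / 2"
      by (rule one_minus_pow) (use rb in auto)
    have m0: "min 1 (t * real (x-y)) \<ge> 0" using rb by simp
    have "(w x y + w y x) * (min 1 (t * real (x-y)) / 4) = w x y * ((1 + r^(x-y)) * (min 1 (t * real (x-y)) / 4))"
      unfolding wyx by (simp add: algebra_simps)
    also have "\<dots> \<le> w x y * (1 - r^(x-y))"
    proof (intro mult_left_mono wnn)
      have "(1 + r^(x-y)) * (min 1 (t * real (x-y)) / 4) \<le> 2 * (min 1 (t * real (x-y)) / 4)"
        using rj m0 by (intro mult_right_mono) auto
      then show "(1 + r^(x-y)) * (min 1 (t * real (x-y)) / 4) \<le> 1 - r^(x-y)" using om by linarith
    qed
    finally show ?thesis unfolding abs .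
  qed
  consider "v < u" | "u < v" | "u = v" by linarith
  then show ?thesis
  proof cases
    case 1
    have "w v u = r^(u-v) * w u v"
      unfolding w_def r_def using swap_ratio[OF p1 p0, of v u N] 1 by simp
    then have "w u v - w v u = w u v * (1 - r^(u-v))" by (simp add: algebra_simps)
    then show ?thesis using key[OF 1] 1 by simp
  next
    case 2
    have "w u v = r^(v-u) * w v u"
      unfolding w_def r_def using swap_ratio[OF p1 p0, of u v N] 2 by simp
    then have "(w u v - w v u) * -1 = w v u * (1 - r^(v-u))" by (simp add: algebra_simps)
    moreover have "\<bar>real v - real u\<bar> = \<bar>real u - real v\<bar>" by simp
    ultimately show ?thesis using key[OF 2] 2 by (simp add: add.commute)
  next
    case 3
    then show ?thesis by simp
  qed
qed

lemma E2_cong: "(\<And>u v. F u v = G u v) \<Longrightarrow> E2 N p1 p0 F = E2 N p1 p0 G"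
  by (simp add: E2_def)

lemma main_sym:
  assumes a: "0 \<le> p0" "p0 < p1" "p1 \<le> 1/2" and t: "t = (p1-p0)/p1"
  shows "E2 N p1 p0 (\<lambda>u v. if u > v then 1 else if u < v then 0 else 1/2)
     \<ge> 1/2 + (1/8) * E2 N p1 p0 (\<lambda>u v. min 1 (t * \<bar>real u - real v\<bar>))"
proof -
  define w where "w = (\<lambda>u v. bw N p1 u * bw N p0 v)"
  define sg :: "nat \<Rightarrow> nat \<Rightarrow> real" where "sg = (\<lambda>u v. if u > v then 1 else if u < v then -1 else 0)"
  define g where "g = (\<lambda>u v. min 1 (t * \<bar>real u - real v\<bar>) / 4)"
  have pr: "p1 \<in> {0..1}" "p0 \<in> {0..1}" using a by auto
  have E2w: "E2 N p1 p0 F = (\<Sum>u\<le>N. \<Sum>v\<le>N. w u v * F u v)" for F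
    unfolding E2_def w_def ..
  have swap: "(\<Sum>u\<le>N. \<Sum>v\<le>N. f u v) = (\<Sum>u\<le>N. \<Sum>v\<le>N. f v u)" for f :: "nat \<Rightarrow> nat \<Rightarrow> real"
    by (rule sum.swap)
  have sgs: "sg v u = - sg u v" for u v unfolding sg_def by auto
  have gs: "g v u = g u v" for u v unfolding g_def by (simp add: abs_minus_commute)
  have "2 * E2 N p1 p0 sg = (\<Sum>u\<le>N. \<Sum>v\<le>N. w u v * sg u v) + (\<Sum>u\<le>N. \<Sum>v\<le>N. w v u * sg v u)"
    unfolding E2w using swap[of "\<lambda>u v. w u v * sg u v"] by simp
  also have "\<dots> = (\<Sum>u\<le>N. \<Sum>v\<le>N. (w u v - w v u) * sg u v)"
  proof -
    have "(\<Sum>u\<le>N. \<Sum>v\<le>N. (w u v - w v u) * sg u v) = (\<Sum>u\<le>N. \<Sum>v\<le>N. w u v * sg u v) - (\<Sum>u\<le>N. \<Sum>v\<le>N. w v u * sg u v)"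
      by (simp only: left_diff_distrib sum_subtractf)
    moreover have "(\<Sum>u\<le>N. \<Sum>v\<le>N. w v u * sg v u) = - (\<Sum>u\<le>N. \<Sum>v\<le>N. w v u * sg u v)"
    proof -
      have "w v u * sg v u = - (w v u * sg u v)" for u v by (simp add: sgs[of u v])
      then show ?thesis by (simp only: sum_negf)
    qed
    ultimately show ?thesis by linarith
  qed
  also have "\<dots> \<ge> (\<Sum>u\<le>N. \<Sum>v\<le>N. (w u v + w v u) * g u v)"
    unfolding w_def sg_def g_def
    by (intro sum_mono) (rule pointwise_sym[OF a t])
  moreover have "(\<Sum>u\<le>N. \<Sum>v\<le>N. (w u v + w v u) * g u v) = 2 * E2 N p1 p0 g"
  proof -
    have "(\<Sum>u\<le>N. \<Sum>v\<le>N. (w u v + w v u) * g u v) = (\<Sum>u\<le>N. \<Sum>v\<le>N. w u v * g u v) + (\<Sum>u\<le>N. \<Sum>v\<le>N. w v u * g v u)"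
    proof -
      have "(w u v + w v u) * g u v = w u v * g u v + w v u * g v u" for u v by (simp add: gs[of u v] algebra_simps)
      then show ?thesis by (simp only: sum.distrib)
    qed
    also have "\<dots> = 2 * E2 N p1 p0 g"
      unfolding E2w using swap[of "\<lambda>u v. w u v * g u v"] by simp
    finally show ?thesis .
  qed
  ultimately have sgg: "E2 N p1 p0 sg \<ge> E2 N p1 p0 g" by linarith
  have "E2 N p1 p0 (\<lambda>u v. if u > v then 1 else if u < v then 0 else 1/2)
        = E2 N p1 p0 (\<lambda>u v. (1/2) * 1 + (1/2) * sg u v)"
    by (rule E2_cong) (simp add: sg_def)
  also have "\<dots> = 1/2 + (1/2) * E2 N p1 p0 sg"
    using E2_lin[of N p1 p0 "1/2" "\<lambda>u v. 1" "1/2" sg] E2_const[OF pr, of N 1] by simp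
  finally have Y: "E2 N p1 p0 (\<lambda>u v. if u > v then 1 else if u < v then 0 else 1/2) = 1/2 + (1/2) * E2 N p1 p0 sg" .
  have "E2 N p1 p0 g = (1/4) * E2 N p1 p0 (\<lambda>u v. min 1 (t * \<bar>real u - real v\<bar>))"
    unfolding g_def using E2_lin[of N p1 p0 "1/4" "\<lambda>u v. min 1 (t * \<bar>real u - real v\<bar>)" 0 "\<lambda>u v. 0"]
    by simp
  then show ?thesis using Y sgg by linarith
qed

lemma cubic_aux:
  fixes b :: real assumes "b \<ge> 0"
  shows "b \<ge> 3*b^2/2 - b^4/2"
proof -
  have h1: "b^2 \<le> (b + b^3)/2"
  proof -
    have "b * (1 - b)^2 \<ge> 0" using assms by simp
    then show ?thesis by (simp add: power2_eq_square power3_eq_cube algebra_simps)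
  qed
  have h2: "b^3 \<le> (b^2 + b^4)/2"
  proof -
    have "b^2 * (1 - b)^2 \<ge> 0" by simp
    then show ?thesis by (simp add: power2_eq_square power3_eq_cube power4_eq_xxxx algebra_simps)
  qed
  have gen: "x \<le> (b + y)/2 \<Longrightarrow> y \<le> (x + z)/2 \<Longrightarrow> b \<ge> 3*x/2 - z/2" for x y z :: real
    by (simp add: field_simps)
  show ?thesis using gen[OF h1 h2] .
qed

lemma abs_lower:
  fixes x L :: real assumes L: "L > 0"
  shows "\<bar>x\<bar> \<ge> 3 * x^2 / (2*L) - x^4 / (2*L^3)"
proof -
  define b where "b = \<bar>x\<bar> / L"
  have b0: "b \<ge> 0" using L by (simp add: b_def)
  have "b \<ge> 3*b^2/2 - b^4/2" by (rule cubic_aux[OF b0])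
  then have "L * b \<ge> L * (3*b^2/2 - b^4/2)" using L by (intro mult_left_mono) auto
  moreover have "L * b = \<bar>x\<bar>" using L by (simp add: b_def)
  moreover have "L * (3*b^2/2 - b^4/2) = 3 * x^2 / (2*L) - x^4 / (2*L^3)"
    using L by (simp add: b_def power_divide field_simps power2_eq_square power4_eq_xxxx power3_eq_cube)
  ultimately show ?thesis by simp
qed

lemma min_lower:
  fixes y :: real assumes "y \<ge> 0" shows "min 1 y \<ge> y - y^2/4"
proof (cases "y \<le> 1")
  case True then show ?thesis by (simp add: min_def)
next
  case False
  have "(y - 2)^2 \<ge> 0" by simp
  then have "y - y^2/4 \<le> 1" by (simp add: power2_eq_square algebra_simps)
  then show ?thesis using False by (simp add: min_def)
qed

lemma pointwise_gauss:
  fixes x t t' L :: real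
  assumes "0 \<le> t'" "t' \<le> t" "L > 0"
  shows "min 1 (t * \<bar>x\<bar>) \<ge> (3*t'/(2*L) - t'^2/4) * x^2 - t'/(2*L^3) * x^4"
proof -
  have "min 1 (t * \<bar>x\<bar>) \<ge> min 1 (t' * \<bar>x\<bar>)"
    using assms by (intro min.mono order.refl mult_right_mono) auto
  moreover have "min 1 (t' * \<bar>x\<bar>) \<ge> t' * \<bar>x\<bar> - (t' * \<bar>x\<bar>)^2/4"
    using assms by (intro min_lower) auto
  moreover have "t' * \<bar>x\<bar> \<ge> t' * (3 * x^2 / (2*L) - x^4 / (2*L^3))"
    using assms abs_lower[OF assms(3), of x] by (intro mult_left_mono) auto
  moreover have "t' * (3 * x^2 / (2*L) - x^4 / (2*L^3)) = (3*t'/(2*L)) * x^2 - t'/(2*L^3) * x^4"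
    by (simp add: algebra_simps)
  moreover have "(t' * \<bar>x\<bar>)^2 = t'^2 * x^2" by (simp add: power_mult_distrib)
  moreover have "(3*t'/(2*L) - t'^2/4) * x^2 = (3*t'/(2*L)) * x^2 - t'^2 * x^2/4"
    by (simp add: algebra_simps)
  ultimately show ?thesis by linarith
qed

lemma pointwise_poisson:
  fixes t :: real and u v :: nat
  assumes "0 \<le> t" "t \<le> 1"
  shows "min 1 (t * \<bar>real u - real v\<bar>) \<ge> t/2 * 3 * (real u - real v)^2 + (-t/2) * (real u - real v)^4"
proof -
  define k where "k = (if v \<le> u then u - v else v - u)"
  have k: "\<bar>real u - real v\<bar> = real k" unfolding k_def by auto
  have sq: "(real u - real v)^2 = real k ^ 2" by (metis k power2_abs)
  have q4: "(real u - real v)^4 = real k ^ 4"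
    by (metis sq power_mult[of _ 2 2, symmetric] num_double numeral_times_numeral)
  consider "k = 0" | "k = 1" | "k \<ge> 2" by linarith
  then show ?thesis
  proof cases
    case 1 then show ?thesis using k sq q4 by simp
  next
    case 2
    then show ?thesis using k sq q4 assms by (simp add: min_def)
  next
    case 3
    define z where "z = real k ^ 2"
    have "real k \<ge> 2" using 3 by simp
    then have z4: "z \<ge> 4" unfolding z_def using power_mono[of 2 "real k" 2] by simp
    have zz: "real k ^ 4 = z^2" unfolding z_def by (simp add: power_mult[symmetric])
    have "z * z \<ge> 4 * z" using z4 by (intro mult_right_mono) auto
    then have "3 * z - z^2 \<le> 0" using z4 by (simp add: power2_eq_square)
    then have "t/2 * (3 * z - z^2) \<le> 0" using assms by (simp add: mult_nonneg_nonpos)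
    moreover have "min 1 (t * \<bar>real u - real v\<bar>) \<ge> 0" using assms by simp
    ultimately show ?thesis using sq q4 zz unfolding z_def[symmetric]
      by (simp add: algebra_simps)
  qed
qed

lemma core:
  fixes N :: nat and p0 p1 :: real
  assumes a: "0 \<le> p0" "p0 < p1" "p1 \<le> 1/2"
  defines "Y \<equiv> E2 N p1 p0 (\<lambda>u v. if u > v then 1 else if u < v then 0 else 1/2)"
  shows "(N * p1 < 1/8 \<and> Y \<ge> 1/2 + N * (p1 - p0) / 32) \<or>
         Y \<ge> 1/2 + (1/64) * min ((p1 - p0) * sqrt (N / (2 * p1))) (1/4)"
proof -
  define t where "t = (p1-p0)/p1"
  define V1 where "V1 = N * p1 * (1-p1)"
  define V0 where "V0 = N * p0 * (1-p0)"
  define \<mu> where "\<mu> = N * (p1 - p0)"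
  define V where "V = V1 + V0"
  define M2 where "M2 = E2 N p1 p0 (\<lambda>u v. (real u - real v)^2)"
  define M4 where "M4 = E2 N p1 p0 (\<lambda>u v. (real u - real v)^4)"
  define Emin where "Emin = E2 N p1 p0 (\<lambda>u v. min 1 (t * \<bar>real u - real v\<bar>))"
  have pr: "p1 \<in> {0..1}" "p0 \<in> {0..1}" using a by auto
  have p1pos: "p1 > 0" using a by (linarith | smt (verit))
  have M2e: "M2 = V + \<mu>^2"
    unfolding M2_def E2_moments(1)[OF pr] V_def V1_def V0_def \<mu>_def by simp
  have M4e: "M4 = (V1 + 3 * N * (real N - 2) * p1^2 * (1-p1)^2) + (V0 + 3 * N * (real N - 2) * p0^2 * (1-p0)^2)
          + 6 * V1 * V0 + 6 * \<mu>^2 * (V1 + V0) + 4 * \<mu> * (V1 * (1 - 2*p1) - V0 * (1 - 2*p0)) + \<mu>^4"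
    unfolding M4_def E2_moments(2)[OF pr] V1_def V0_def \<mu>_def by simp
  have Ym: "Y \<ge> 1/2 + (1/8) * Emin"
    unfolding Y_def Emin_def by (rule main_sym[OF a t_def])
  note rb = r_bounds[OF a, folded t_def]
  have V1nn: "V1 \<ge> 0" and V0nn: "V0 \<ge> 0" unfolding V1_def V0_def using pr by auto
  have V1lb: "N * p1 \<le> 2 * V1"
  proof -
    have "N * p1 * (1/2) \<le> N * p1 * (1 - p1)" using a by (intro mult_left_mono) auto
    then show ?thesis unfolding V1_def by simp
  qed
  have mu0: "\<mu> \<ge> 0" unfolding \<mu>_def using a by simp
  have muNp: "\<mu> \<le> N * p1" unfolding \<mu>_def using a by (simp add: algebra_simps)
  have mu2V: "\<mu> \<le> 2 * V" using muNp V1lb V0nn unfolding V_def by (linarith | smt (verit))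
  have Vnn: "V \<ge> 0" unfolding V_def using V1nn V0nn by simp
  have muV: "\<mu> * V \<le> 2 * V^2"
  proof -
    have "\<mu> * V \<le> (2 * V) * V" using mu2V Vnn by (rule mult_right_mono)
    then show ?thesis by (simp add: power2_eq_square)
  qed
  have sq1: "3 * N * (real N - 2) * p1^2 * (1-p1)^2 \<le> 3 * V1^2"
  proof -
    have "real N * (real N - 2) \<le> real N * real N" by (simp add: mult_left_mono)
    then have "3 * (N * (real N - 2)) * (p1^2 * (1-p1)^2) \<le> 3 * (N * real N) * (p1^2 * (1-p1)^2)"
      by (intro mult_right_mono) auto
    then show ?thesis unfolding V1_def by (simp add: power_mult_distrib algebra_simps power2_eq_square)
  qed
  have sq0: "3 * N * (real N - 2) * p0^2 * (1-p0)^2 \<le> 3 * V0^2"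
  proof -
    have "real N * (real N - 2) \<le> real N * real N" by (simp add: mult_left_mono)
    then have "3 * (N * (real N - 2)) * (p0^2 * (1-p0)^2) \<le> 3 * (N * real N) * (p0^2 * (1-p0)^2)"
      by (intro mult_right_mono) auto
    then show ?thesis unfolding V0_def by (simp add: power_mult_distrib algebra_simps power2_eq_square)
  qed
  have cross: "4 * \<mu> * (V1 * (1 - 2*p1) - V0 * (1 - 2*p0)) \<le> 4 * \<mu> * V"
  proof (rule mult_left_mono)
    have "V1 * (1 - 2*p1) \<le> V1 * 1" using V1nn a by (intro mult_left_mono) auto
    moreover have "V0 * (1 - 2*p0) \<ge> 0" using V0nn a by auto
    ultimately show "V1 * (1 - 2*p1) - V0 * (1 - 2*p0) \<le> V" unfolding V_def using V0nn by (linarith | smt (verit))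
    show "0 \<le> 4 * \<mu>" using mu0 by simp
  qed
  have M4b: "M4 \<le> V + 3 * V^2 + 6 * \<mu>^2 * V + 4 * \<mu> * V + \<mu>^4"
  proof -
    have e1: "3 * V1^2 + 3 * V0^2 + 6 * V1 * V0 = 3 * V^2" unfolding V_def by (simp add: power2_eq_square algebra_simps)
    have e2: "6 * \<mu>^2 * (V1 + V0) = 6 * \<mu>^2 * V" unfolding V_def ..
    have e3: "V1 + V0 = V" unfolding V_def ..
    show ?thesis unfolding M4e e2 using sq1 sq0 cross e1 e3 by (linarith | smt (verit))
  qed
  show ?thesis
  proof (cases "V < 1/16")
    case True
    have "Emin \<ge> E2 N p1 p0 (\<lambda>u v. t/2 * 3 * (real u - real v)^2 + (-t/2) * (real u - real v)^4)"
      unfolding Emin_def by (rule E2_mono[OF pr]) (rule pointwise_poisson, use rb in auto)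
    also have "E2 N p1 p0 (\<lambda>u v. t/2 * 3 * (real u - real v)^2 + (-t/2) * (real u - real v)^4)
       = t/2 * (3 * M2 - M4)"
      unfolding M2_def M4_def E2_lin by (simp add: algebra_simps)
    finally have E1: "Emin \<ge> t/2 * (3 * M2 - M4)" .
    have "3 * M2 - M4 \<ge> V"
    proof -
      have a1: "4 * \<mu> * V \<le> 8 * V^2" using muV by (simp add: mult.commute)
      have vv: "V * V \<le> (1/16) * V" using True Vnn by (intro mult_right_mono) auto
      have a2: "3 * V^2 \<le> 3/16 * V" using vv by (simp add: power2_eq_square)
      have a3: "8 * V^2 \<le> 8/16 * V" using vv by (simp add: power2_eq_square)
      have mu18: "\<mu> \<le> 1/8" using mu2V True by (linarith | smt (verit))
      have a4': "\<mu>^2 * V \<le> \<mu>^2 * (1/16)" using True Vnn by (intro mult_left_mono) auto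
      then have a4: "6 * \<mu>^2 * V \<le> 6/16 * \<mu>^2" by (simp add: algebra_simps)
      have a5: "\<mu>^4 \<le> \<mu>^2"
      proof -
        have "\<mu>^2 \<le> 1" using mu0 mu18 by (simp add: power_le_one)
        then have "\<mu>^2 * \<mu>^2 \<le> 1 * \<mu>^2" by (intro mult_right_mono) auto
        then show ?thesis by (simp add: power4_eq_xxxx power2_eq_square)
      qed
      have "3 * (V + \<mu>^2) = 3 * V + 3 * \<mu>^2" by simp
      moreover have "\<mu>^2 \<ge> 0" by simp
      ultimately show ?thesis unfolding M2e using M4b a1 a2 a3 a4 a5 Vnn by linarith
    qed
    then have "t/2 * V \<le> t/2 * (3 * M2 - M4)" using rb by (intro mult_left_mono) auto
    then have "Emin \<ge> t/2 * V" using E1 by linarith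
    moreover have "t * V \<ge> N * (p1 - p0) / 2"
    proof -
      have "2 * V \<ge> N * p1" using V1lb V0nn unfolding V_def by (linarith | smt (verit))
      then have "t * (2 * V) \<ge> t * (N * p1)" using rb by (intro mult_left_mono) auto
      also have "t * (N * p1) = N * (p1 - p0)" unfolding t_def using p1pos by (simp add: field_simps)
      finally show ?thesis by simp
    qed
    ultimately have "Y \<ge> 1/2 + N * (p1 - p0) / 32" using Ym by (linarith | smt (verit))
    moreover have "N * p1 < 1/8" using V1lb V0nn True unfolding V_def by (linarith | smt (verit))
    ultimately show ?thesis by blast
  next
    case False
    then have Vge: "V \<ge> 1/16" by simp
    have "\<mu>^2 \<ge> 0" by simp
    then have M2pos: "M2 > 0" using Vge M2e by linarith
    define \<sigma> where "\<sigma> = sqrt M2"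
    have sg0: "\<sigma> > 0" unfolding \<sigma>_def using M2pos by simp
    have sg2: "\<sigma>^2 = M2" unfolding \<sigma>_def using M2pos by simp
    have M4s: "M4 \<le> 27 * \<sigma>^4"
    proof -
      have "V * 1 \<le> V * (16 * V)" using Vge Vnn by (intro mult_left_mono) auto
      then have b1: "V \<le> 16 * V^2" by (simp add: power2_eq_square)
      have b2: "4 * \<mu> * V \<le> 8 * V^2" using muV by (simp add: mult.commute)
      have s4: "\<sigma>^4 = M2 * M2" using sg2 by (simp add: power4_eq_xxxx power2_eq_square)
      have e: "27 * \<sigma>^4 = 27 * V^2 + 54 * (\<mu>^2 * V) + 27 * \<mu>^4"
        unfolding s4 M2e by (simp add: power2_eq_square power4_eq_xxxx algebra_simps)
      have M4b': "M4 \<le> V + 3 * V^2 + 6 * (\<mu>^2 * V) + 4 * \<mu> * V + \<mu>^4"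
        using M4b by (simp add: algebra_simps)
      have "0 \<le> \<mu>^2 * V" using Vge by simp
      moreover have "0 \<le> \<mu>^4" by simp
      ultimately show ?thesis using M4b' b1 b2 e by linarith
    qed
    define t' where "t' = min t (1 / (4 * \<sigma>))"
    define L where "L = 6 * \<sigma>"
    have t'0: "0 \<le> t'" "t' \<le> t" unfolding t'_def using rb sg0 by auto
    have L0: "L > 0" unfolding L_def using sg0 by simp
    define y where "y = t' * \<sigma>"
    have y0: "0 \<le> y" "y \<le> 1/4" unfolding y_def t'_def using sg0 rb
      by (auto simp: min_def field_simps)
    have ymin: "y = min (t * \<sigma>) (1/4)" unfolding y_def t'_def using sg0
      by (auto simp: min_def field_simps)
    have E1a: "Emin \<ge> E2 N p1 p0 (\<lambda>u v. (3*t'/(2*L) - t'^2/4) * (real u - real v)^2 + (- (t'/(2*L^3))) * (real u - real v)^4)"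
      unfolding Emin_def by (rule E2_mono[OF pr]) (use pointwise_gauss[OF t'0 L0] in simp)
    have E1b: "E2 N p1 p0 (\<lambda>u v. (3*t'/(2*L) - t'^2/4) * (real u - real v)^2 + (- (t'/(2*L^3))) * (real u - real v)^4) = (3*t'/(2*L) - t'^2/4) * M2 - (t'/(2*L^3)) * M4"
      unfolding M2_def M4_def E2_lin by simp
    have E1: "Emin \<ge> (3*t'/(2*L) - t'^2/4) * M2 - (t'/(2*L^3)) * M4" using E1a E1b by simp
    have c0: "t'/(2*L^3) \<ge> 0" using t'0 L0 by simp
    have "(t'/(2*L^3)) * M4 \<le> (t'/(2*L^3)) * (27 * \<sigma>^4)" using M4s c0 by (rule mult_left_mono)
    also have "\<dots> = y * 27 / 432" unfolding y_def L_def using sg0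
      by (simp add: field_simps power3_eq_cube power4_eq_xxxx)
    finally have E2b: "(t'/(2*L^3)) * M4 \<le> y * 27 / 432" .
    have E3: "(3*t'/(2*L) - t'^2/4) * M2 = y/4 - y^2/4"
      unfolding sg2[symmetric] y_def L_def using sg0 by (simp add: field_simps power2_eq_square)
    have "y^2 \<le> y * (1/4)" using y0 unfolding power2_eq_square by (intro mult_left_mono) auto
    then have "Emin \<ge> y / 8" using E1 E2b E3 by (linarith | smt (verit))
    then have Yy: "Y \<ge> 1/2 + (1/64) * min (t * \<sigma>) (1/4)" using Ym ymin by (linarith | smt (verit))
    have "t * \<sigma> \<ge> (p1 - p0) * sqrt (N / (2 * p1))"
    proof -
      have "\<mu>^2 \<ge> 0" by simp
      then have "N * p1 / 2 \<le> M2" using M2e V1lb V0nn unfolding V_def by linarith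
      then have "\<sigma> \<ge> sqrt (N * p1 / 2)" unfolding \<sigma>_def by (rule real_sqrt_le_mono)
      then have "t * \<sigma> \<ge> t * sqrt (N * p1 / 2)" using rb by (intro mult_left_mono) auto
      moreover have "t * sqrt (N * p1 / 2) = (p1 - p0) * sqrt (N / (2 * p1))"
      proof -
        have "sqrt (N * p1 / 2) = p1 * sqrt (N / (2 * p1))"
        proof -
          have "N * p1 / 2 = p1^2 * (N / (2 * p1))" using p1pos by (simp add: field_simps power2_eq_square)
          then have "sqrt (N * p1 / 2) = sqrt (p1^2 * (N / (2 * p1)))" by (simp only:)
          also have "\<dots> = sqrt (p1^2) * sqrt (N / (2 * p1))" by (rule real_sqrt_mult)
          also have "sqrt (p1^2) = p1" using p1pos by simp
          finally show ?thesis .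
        qed
        then show ?thesis unfolding t_def using p1pos by simp
      qed
      ultimately show ?thesis by simp
    qed
    then have "min (t * \<sigma>) (1/4) \<ge> min ((p1 - p0) * sqrt (N / (2 * p1))) (1/4)" by (simp add: min_def)
    then show ?thesis using Yy by (linarith | smt (verit))
  qed
qed

lemma prob_triple:
  assumes p1: "p1 \<in> {0..1}" and p0: "p0 \<in> {0..1}"
  shows "measure_pmf.prob (pair_pmf (binomial_pmf N p1) (pair_pmf (binomial_pmf N p0) (bernoulli_pmf (1/2))))
           {z. (if fst z > fst (snd z) then True else if fst z < fst (snd z) then False else snd (snd z))}
         = E2 N p1 p0 (\<lambda>u v. if u > v then 1 else if u < v then 0 else 1/2)"
    (is "measure_pmf.prob ?M ?S = _")
proof -
  let ?A = "{..N} \<times> ({..N} \<times> (UNIV :: bool set))"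
  have fin: "finite ?A" by simp
  have "measure_pmf.prob ?M ?S = (\<integral>z. indicator ?S z \<partial>measure_pmf ?M)"
    by simp
  also have "\<dots> = (\<Sum>z\<in>?A. indicator ?S z * pmf ?M z)"
    by (rule integral_measure_pmf_real[OF fin]) (use p1 p0 in \<open>auto simp: set_pmf_binomial_eq split: if_splits\<close>)
  also have "\<dots> = (\<Sum>x\<le>N. \<Sum>yc\<in>{..N} \<times> (UNIV :: bool set). indicator ?S (x, yc) * pmf ?M (x, yc))"
    by (subst sum.cartesian_product) (simp add: case_prod_unfold)
  also have "\<dots> = (\<Sum>x\<le>N. \<Sum>y\<le>N. \<Sum>c\<in>(UNIV :: bool set). indicator ?S (x, (y, c)) * pmf ?M (x, (y, c)))"
    by (intro sum.cong refl) (subst sum.cartesian_product, simp add: case_prod_unfold)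
  also have "\<dots> = (\<Sum>x\<le>N. \<Sum>y\<le>N. bw N p1 x * bw N p0 y * (if x > y then 1 else if x < y then 0 else 1/2))"
    by (intro sum.cong refl) (use p1 p0 in \<open>auto simp: pmf_pair UNIV_bool bw_def indicator_def\<close>)
  also have "\<dots> = E2 N p1 p0 (\<lambda>u v. if u > v then 1 else if u < v then 0 else 1/2)"
    unfolding E2_def ..
  finally show ?thesis .
qed

lemma noisy_bern:
  fixes \<delta> :: real and n :: nat and disp :: "nat \<Rightarrow> bool"
  assumes n: "n \<ge> 1" and d: "0 \<le> \<delta>" "\<delta> \<le> 1/2"
  shows "map_pmf (observe disp) (noisy_sample n \<delta>) =
         bernoulli_pmf (\<delta> + card {j\<in>{1..n}. disp j} * (1 - 2*\<delta>) / n)"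
proof -
  define k where "k = card {j\<in>{1..n}. disp j}"
  define p where "p = \<delta> + k * (1 - 2*\<delta>) / n"
  have kn: "k \<le> n" unfolding k_def by (metis (no_types, lifting) card_atLeastAtMost card_mono diff_Suc_1 finite_atLeastAtMost mem_Collect_eq subsetI)
  have npos: "real n > 0" using n by simp
  have p01: "0 \<le> p" "p \<le> 1"
  proof -
    have "0 \<le> k * (1 - 2*\<delta>) / n" using d by simp
    then show "0 \<le> p" unfolding p_def using d by linarith
    have "k * (1 - 2*\<delta>) \<le> n * (1 - 2*\<delta>)" using kn d by (intro mult_right_mono) auto
    then have "k * (1 - 2*\<delta>) / n \<le> 1 - 2*\<delta>" using npos by (simp add: field_simps)
    then show "p \<le> 1" unfolding p_def using d by linarith
  qed
  have T: "pmf (map_pmf (observe disp) (noisy_sample n \<delta>)) True = p"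
  proof -
    let ?M = "noisy_sample n \<delta>"
    let ?A = "{1..n} \<times> (UNIV :: bool set)"
    have "pmf (map_pmf (observe disp) ?M) True = measure_pmf.prob ?M {s. observe disp s}"
      by (simp add: pmf_map vimage_def)
    also have "\<dots> = (\<integral>z. indicator {s. observe disp s} z \<partial>measure_pmf ?M)" by simp
    also have "\<dots> = (\<Sum>z\<in>?A. indicator {s. observe disp s} z * pmf ?M z)"
      by (rule integral_measure_pmf_real) (use n in \<open>auto simp: noisy_sample_def\<close>)
    also have "\<dots> = (\<Sum>j\<in>{1..n}. \<Sum>b\<in>(UNIV :: bool set). indicator {s. observe disp s} (j, b) * pmf ?M (j, b))"
      by (subst sum.cartesian_product) (simp add: case_prod_unfold)
    also have "\<dots> = (\<Sum>j\<in>{1..n}. (if disp j then 1 - \<delta> else \<delta>) / n)"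
      by (intro sum.cong refl) (use d n in \<open>auto simp: UNIV_bool noisy_sample_def pmf_pair observe_def indicator_def\<close>)
    also have "\<dots> = (\<Sum>j\<in>{1..n}. \<delta> / n + (if disp j then (1 - 2*\<delta>) / n else 0))"
      by (intro sum.cong refl) (auto simp: field_simps)
    also have "\<dots> = \<delta> + k * (1 - 2*\<delta>) / n"
    proof -
      have s2: "(\<Sum>j\<in>{1..n}. (if disp j then (1 - 2*\<delta>) / n else 0)) = k * ((1 - 2*\<delta>) / n)"
        unfolding k_def by (subst sum.inter_filter[symmetric]) auto
      show ?thesis unfolding sum.distrib s2 using npos by (simp add: field_simps)
    qed
    finally show ?thesis unfolding p_def .
  qed
  have "map_pmf (observe disp) (noisy_sample n \<delta>) = bernoulli_pmf p"
  proof (rule pmf_eqI)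
    fix b :: bool
    show "pmf (map_pmf (observe disp) (noisy_sample n \<delta>)) b = pmf (bernoulli_pmf p) b"
      using T p01 by (cases b) (simp_all add: pmf_False_conv_True[of "map_pmf _ _"])
  qed
  then show ?thesis unfolding p_def k_def .
qed

lemma count_binomial:
  assumes A: "finite A" "card A = N" and F: "map_pmf F q = bernoulli_pmf p" and p: "p \<in> {0..1}"
  shows "map_pmf (\<lambda>f. card {x\<in>A. F (f x)}) (Pi_pmf A d (\<lambda>_. q)) = binomial_pmf N p"
proof -
  have "map_pmf (\<lambda>f. card {x\<in>A. F (f x)}) (Pi_pmf A d (\<lambda>_. q)) =
        map_pmf (\<lambda>g. card {x\<in>A. g x}) (map_pmf (\<lambda>f. F \<circ> f) (Pi_pmf A d (\<lambda>_. q)))"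
    by (simp add: pmf.map_comp o_def)
  also have "map_pmf (\<lambda>f. F \<circ> f) (Pi_pmf A d (\<lambda>_. q)) = Pi_pmf A (F d) (\<lambda>_. map_pmf F q)"
    by (rule Pi_pmf_map[symmetric]) (use A in auto)
  also have "\<dots> = Pi_pmf A (F d) (\<lambda>_. bernoulli_pmf p)" unfolding F ..
  also have "map_pmf (\<lambda>g. card {x\<in>A. g x}) \<dots> = binomial_pmf N p"
    by (rule binomial_pmf_altdef'[symmetric]) (use A p in auto)
  finally show ?thesis .
qed

lemma p_range:
  fixes \<delta> :: real and k n :: nat
  assumes "k \<le> n" "n \<ge> 1" "0 \<le> \<delta>" "\<delta> \<le> 1/2"
  shows "0 \<le> \<delta> + k * (1 - 2*\<delta>) / n" "\<delta> + k * (1 - 2*\<delta>) / n \<le> 1"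
proof -
  have npos: "real n > 0" using assms by simp
  have "0 \<le> k * (1 - 2*\<delta>) / n" using assms by simp
  then show "0 \<le> \<delta> + k * (1 - 2*\<delta>) / n" using assms by linarith
  have "k * (1 - 2*\<delta>) \<le> n * (1 - 2*\<delta>)" using assms by (intro mult_right_mono) auto
  then have "k * (1 - 2*\<delta>) / n \<le> 1 - 2*\<delta>" using npos by (simp add: field_simps)
  then show "\<delta> + k * (1 - 2*\<delta>) / n \<le> 1" using assms by linarith
qed

lemma agent_prob:
  fixes \<delta> :: real
  assumes n: "n \<ge> 1" and d: "0 \<le> \<delta>" "\<delta> \<le> 1/2"
    and S: "S0 \<subseteq> {1..n}" "S1 \<subseteq> {1..n}" "S0 \<inter> S1 = {}"
  shows "measure_pmf.prob (agent_pmf n \<delta> h R) {c. weak_opinion S0 S1 h R c} =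
     E2 (R * h) (\<delta> + card S1 * (1 - 2*\<delta>) / n) (\<delta> + card S0 * (1 - 2*\<delta>) / n)
        (\<lambda>u v. if u > v then 1 else if u < v then 0 else 1/2)"
proof -
  define A where "A = {..<R} \<times> {..<h}"
  define N where "N = R * h"
  define p1 where "p1 = \<delta> + card S1 * (1 - 2*\<delta>) / n"
  define p0 where "p0 = \<delta> + card S0 * (1 - 2*\<delta>) / n"
  define P where "P = Pi_pmf A undefined (\<lambda>_. noisy_sample n \<delta>)"
  define C where "C = bernoulli_pmf (1/2 :: real)"
  define g1 where "g1 = (\<lambda>f. card {x\<in>A. observe (display0 S0 S1) (f x)})"
  define g0 where "g0 = (\<lambda>f. card {x\<in>A. observe (\<lambda>j. \<not> display1 S0 S1 j) (f x)})"
  have finA: "finite A" "card A = N" unfolding A_def N_def by (auto simp: card_cartesian_product)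
  have cS1: "card S1 \<le> n" using S card_mono[of "{1..n}" S1] by auto
  have cS0: "card S0 \<le> n" using S card_mono[of "{1..n}" S0] by auto
  have p1r: "p1 \<in> {0..1}" unfolding p1_def using p_range[OF cS1 n d] by auto
  have p0r: "p0 \<in> {0..1}" unfolding p0_def using p_range[OF cS0 n d] by auto
  have set1: "{j\<in>{1..n}. display0 S0 S1 j} = S1" using S by (auto simp: display0_def)
  have set0: "{j\<in>{1..n}. \<not> display1 S0 S1 j} = S0" using S by (auto simp: display1_def)
  have B1: "map_pmf g1 P = binomial_pmf N p1"
    unfolding g1_def P_def
    by (rule count_binomial[OF finA _ p1r]) (use noisy_bern[OF n d, of "display0 S0 S1"] set1 p1_def in simp)
  have B0: "map_pmf g0 P = binomial_pmf N p0"
    unfolding g0_def P_def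
    by (rule count_binomial[OF finA _ p0r]) (use noisy_bern[OF n d, of "\<lambda>j. \<not> display1 S0 S1 j"] set0 p0_def in simp)
  define \<Phi> :: "agent_coins \<Rightarrow> nat \<times> nat \<times> bool" where "\<Phi> = (\<lambda>(a, b). (g1 a, (\<lambda>(x, y). (g0 x, y)) b))"
  have agent: "agent_pmf n \<delta> h R = pair_pmf P (pair_pmf P C)"
    unfolding agent_pmf_def P_def C_def A_def ..
  have mapP: "map_pmf \<Phi> (pair_pmf P (pair_pmf P C)) =
      pair_pmf (binomial_pmf N p1) (pair_pmf (binomial_pmf N p0) C)"
  proof -
    have "map_pmf \<Phi> (pair_pmf P (pair_pmf P C)) = pair_pmf (map_pmf g1 P) (map_pmf (\<lambda>(x, y). (g0 x, y)) (pair_pmf P C))"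
      unfolding \<Phi>_def by (rule map_pair)
    also have "map_pmf (\<lambda>(x, y). (g0 x, y)) (pair_pmf P C) = pair_pmf (map_pmf g0 P) (map_pmf id C)"
      using map_pair[of g0 id P C] by simp
    finally show ?thesis using B1 B0 by simp
  qed
  have c1: "counter1 S0 S1 h R c = g1 (fst c)" for c
    unfolding counter1_def g1_def A_def by simp
  have c0: "counter0 S0 S1 h R c = g0 (fst (snd c))" for c
    unfolding counter0_def g0_def A_def observe_def by (intro arg_cong[where f = card]) auto
  have pre: "{c. weak_opinion S0 S1 h R c} = \<Phi> -`
      {z. (if fst z > fst (snd z) then True else if fst z < fst (snd z) then False else snd (snd z))}"
    unfolding weak_opinion_def c1 c0 \<Phi>_def by (auto simp: case_prod_unfold)
  have "measure_pmf.prob (agent_pmf n \<delta> h R) {c. weak_opinion S0 S1 h R c} =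
     measure_pmf.prob (map_pmf \<Phi> (agent_pmf n \<delta> h R))
      {z. (if fst z > fst (snd z) then True else if fst z < fst (snd z) then False else snd (snd z))}"
    unfolding pre by simp
  also have "\<dots> = E2 N p1 p0 (\<lambda>u v. if u > v then 1 else if u < v then 0 else 1/2)"
    unfolding agent mapP unfolding C_def by (rule prob_triple[OF p1r p0r])
  finally show ?thesis unfolding N_def p1_def p0_def .
qed

lemma sqrt_ge_from_sq:
  fixes X B :: real assumes "X \<ge> 0" "B \<ge> 0" "X^2 \<ge> B^2" shows "X \<ge> B"
  using assms by (auto intro: power2_le_imp_le)

lemma case2_bound:
  fixes n N \<delta> s s1 s0 L c1 :: real
  assumes n: "n > 0" and L: "L \<ge> 0" and s: "s \<ge> 1" "s = s1 - s0" "s0 \<ge> 0" and s1n: "4 * s1 \<le> n"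
    and d: "0 \<le> \<delta>" "\<delta> < 1/2" and N: "N \<ge> 0" and c1: "c1 \<ge> 0"
    and HT1: "N \<ge> c1 * (n * \<delta> * L / (min (s^2) n * (1 - 2*\<delta>)^2))"
    and HT3: "N \<ge> c1 * ((s0 + s1) * L / s^2)"
  defines "p1 \<equiv> \<delta> + s1 * (1 - 2*\<delta>) / n" and "p0 \<equiv> \<delta> + s0 * (1 - 2*\<delta>) / n"
  shows "(p1 - p0)^2 * N / p1 \<ge> c1 * L / (4 * n)"
proof -
  define e where "e = 1 - 2*\<delta>"
  have e0: "e > 0" "e \<le> 1" unfolding e_def using d by auto
  have s1pos: "s1 \<ge> 1" using s by linarith
  have D: "p1 - p0 = s * e / n" unfolding p1_def p0_def e_def s(2) using n by (simp add: field_simps)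
  have D2: "(p1 - p0)^2 = s^2 * e^2 / n^2" unfolding D by (simp add: power_divide power_mult_distrib)
  have p1pos: "p1 > 0" unfolding p1_def using d n s1pos e0 by (simp add: e_def[symmetric] add_nonneg_pos)
  show ?thesis
  proof (cases "s1 * e / n \<le> \<delta>")
    case True
    have dpos: "\<delta> > 0" using True n s1pos e0 by (smt (verit) divide_pos_pos mult_pos_pos)
    have p1le: "p1 \<le> 2 * \<delta>" unfolding p1_def using True e_def by simp
    have mn: "min (s^2) n \<le> s^2" by simp
    have mpos: "min (s^2) n > 0" using n s by simp
    have "n * \<delta> * L / (s^2 * e^2) \<le> n * \<delta> * L / (min (s^2) n * e^2)"
      using mn mpos e0 n d L by (intro divide_left_mono mult_right_mono mult_nonneg_nonneg) auto
    then have N1: "N \<ge> c1 * (n * \<delta> * L / (s^2 * e^2))"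
      using HT1 c1 unfolding e_def by (smt (verit) mult_left_mono)
    have "(p1 - p0)^2 * N \<ge> (s^2 * e^2 / n^2) * (c1 * (n * \<delta> * L / (s^2 * e^2)))"
      unfolding D2 using N1 by (intro mult_left_mono) auto
    also have "(s^2 * e^2 / n^2) * (c1 * (n * \<delta> * L / (s^2 * e^2))) = c1 * \<delta> * L / n"
      using n e0 s by (simp add: field_simps power2_eq_square)
    finally have A: "(p1 - p0)^2 * N \<ge> c1 * \<delta> * L / n" .
    have "(p1 - p0)^2 * N / p1 \<ge> (c1 * \<delta> * L / n) / (2 * \<delta>)"
      using A p1le p1pos c1 d L n N by (intro frac_le) auto
    also have "(c1 * \<delta> * L / n) / (2 * \<delta>) = c1 * L / (2 * n)" using dpos by (simp add: field_simps)
    finally have "(p1 - p0)^2 * N / p1 \<ge> c1 * L / (2 * n)" .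
    moreover have "c1 * L / (4 * n) \<le> c1 * L / (2 * n)" using c1 L n by (intro divide_left_mono) auto
    ultimately show ?thesis by linarith
  next
    case False
    have p1e: "p1 = \<delta> + s1 * e / n" unfolding p1_def e_def ..
    have p1le: "p1 \<le> 2 * (s1 * e / n)" using False p1e by linarith
    have "s1 / n \<le> 1/4" using s1n n by (simp add: field_simps)
    moreover have "\<delta> < s1 / n" using False e0 n s1pos
      by (smt (verit) divide_right_mono mult_left_le mult_nonneg_nonneg)
    ultimately have eh: "e \<ge> 1/2" unfolding e_def by linarith
    have N3: "N \<ge> c1 * (s1 * L / s^2)"
    proof -
      have "s1 * L / s^2 \<le> (s0 + s1) * L / s^2" using s L by (intro divide_right_mono mult_right_mono) auto
      then show ?thesis using HT3 c1 by (smt (verit) mult_left_mono)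
    qed
    have "(p1 - p0)^2 * N \<ge> (s^2 * e^2 / n^2) * (c1 * (s1 * L / s^2))"
      unfolding D2 using N3 by (intro mult_left_mono) auto
    also have "(s^2 * e^2 / n^2) * (c1 * (s1 * L / s^2)) = c1 * s1 * e^2 * L / n^2"
      using n s by (simp add: field_simps power2_eq_square)
    finally have A: "(p1 - p0)^2 * N \<ge> c1 * s1 * e^2 * L / n^2" .
    have "(p1 - p0)^2 * N / p1 \<ge> (c1 * s1 * e^2 * L / n^2) / (2 * (s1 * e / n))"
      using A p1le p1pos c1 L n e0 s1pos N by (intro frac_le) auto
    also have "(c1 * s1 * e^2 * L / n^2) / (2 * (s1 * e / n)) = c1 * e * L / (2 * n)"
      using n e0 s1pos by (simp add: field_simps power2_eq_square)
    finally have B: "(p1 - p0)^2 * N / p1 \<ge> c1 * e * L / (2 * n)" .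
    have "c1 * L / (4 * n) = c1 * (1/2) * L / (2 * n)" by simp
    also have "\<dots> \<le> c1 * e * L / (2 * n)"
      using eh c1 L n by (intro divide_right_mono mult_right_mono mult_left_mono) auto
    finally show ?thesis using B by linarith
  qed
qed

lemma final_arith:
  fixes n N \<delta> s s1 s0 L Y :: real
  assumes n: "n \<ge> 2^44" and L1: "L \<ge> 1" and Lsq: "L \<le> 2 * sqrt n"
    and s: "s \<ge> 1" "s = s1 - s0" "s0 \<ge> 0" and s1n: "4 * s1 \<le> n"
    and d: "0 \<le> \<delta>" "\<delta> < 1/2" and N: "N \<ge> 1"
    and HT1: "N \<ge> 10^6 * (n * \<delta> * L / (min (s^2) n * (1 - 2*\<delta>)^2))"
    and HT2: "N \<ge> 10^6 * (sqrt n * L / s)"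
    and HT3: "N \<ge> 10^6 * ((s0 + s1) * L / s^2)"
  defines "p1 \<equiv> \<delta> + s1 * (1 - 2*\<delta>) / n" and "p0 \<equiv> \<delta> + s0 * (1 - 2*\<delta>) / n"
  assumes core: "(N * p1 < 1/8 \<and> Y \<ge> 1/2 + N * (p1 - p0) / 32) \<or>
         Y \<ge> 1/2 + (1/64) * min ((p1 - p0) * sqrt (N / (2 * p1))) (1/4)"
  shows "Y \<ge> 1/2 + 4 * sqrt (L / n)"
proof -
  define r where "r = sqrt n"
  have npos: "n > 0" using n by (smt (verit) zero_less_power)
  have rpos: "r > 0" unfolding r_def using npos by simp
  have r2: "r^2 = n" unfolding r_def using npos by simp
  have rbig: "r \<ge> 2^22"
  proof -
    have "sqrt ((2^22)^2) \<le> sqrt n" using n by (intro real_sqrt_le_mono) simp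
    then show ?thesis unfolding r_def by simp
  qed
  have sqLn: "sqrt (L / n) = sqrt L / r" unfolding r_def by (simp add: real_sqrt_divide)
  have sL: "sqrt L \<le> L"
  proof -
    have "L * 1 \<le> L * L" using L1 by (intro mult_left_mono) auto
    then have "sqrt L \<le> sqrt (L * L)" by (intro real_sqrt_le_mono) simp
    then show ?thesis using L1 by simp
  qed
  have sL0: "sqrt L \<ge> 0" using L1 by simp
  define e where "e = 1 - 2*\<delta>"
  have e0: "e > 0" unfolding e_def using d by simp
  have D: "p1 - p0 = s * e / n" unfolding p1_def p0_def e_def s(2) using npos by (simp add: field_simps)
  have D0: "p1 - p0 \<ge> 0" unfolding D using s e0 npos by simp
  have s1pos: "s1 \<ge> 1" using s by linarith
  have dp1: "\<delta> \<le> p1" unfolding p1_def using s1pos e0 npos unfolding e_def[symmetric] by simp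
  have p1pos: "p1 > 0" unfolding p1_def using d npos s1pos e0 by (simp add: e_def[symmetric] add_nonneg_pos)
  from core show ?thesis
  proof
    assume c: "N * p1 < 1/8 \<and> Y \<ge> 1/2 + N * (p1 - p0) / 32"
    have "\<delta> \<le> N * \<delta>" using N d by (simp add: mult_le_cancel_right1)
    also have "N * \<delta> \<le> N * p1" using dp1 N by (intro mult_left_mono) auto
    finally have "\<delta> < 1/8" using c by linarith
    then have e34: "e \<ge> 3/4" unfolding e_def by linarith
    have Ns: "N * s \<ge> 10^6 * (r * L)"
    proof -
      have "10^6 * (sqrt n * L / s) * s = 10^6 * (r * L)" using s unfolding r_def by simp
      moreover have "10^6 * (sqrt n * L / s) * s \<le> N * s" using HT2 s by (intro mult_right_mono) auto
      ultimately show ?thesis by simp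
    qed
    have e1: "N * (p1 - p0) = (N * s) * e / r^2" unfolding D r2 by simp
    have Ns0: "0 \<le> N * s" using N s by simp
    have e2: "(10^6 * (r * L)) * (3/4) \<le> (N * s) * e"
      by (rule mult_mono[OF Ns e34 Ns0]) simp
    have e3: "(10^6 * (r * L)) * (3/4) / r^2 \<le> (N * s) * e / r^2"
      using e2 rpos by (intro divide_right_mono) auto
    have e4: "(10^6 * (r * L)) * (3/4) / r^2 = 750000 * L / r" using rpos by (simp add: power2_eq_square)
    have A0: "N * (p1 - p0) \<ge> 750000 * L / r" using e1 e3 e4 by linarith
    have A: "N * (p1 - p0) / 32 \<ge> 750000 * L / r / 32" using A0 by (intro divide_right_mono) auto
    have f1: "4 * sqrt L \<le> 750000 * L / 32" using sL sL0 by linarith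
    have f2: "4 * sqrt L / r \<le> (750000 * L / 32) / r" using f1 rpos by (intro divide_right_mono) auto
    have f3: "4 * sqrt (L / n) = 4 * sqrt L / r" unfolding sqLn by simp
    have f4: "(750000 * L / 32) / r = 750000 * L / r / 32" by simp
    have c2: "Y \<ge> 1/2 + N * (p1 - p0) / 32" using c by simp
    have g1: "4 * sqrt (L / n) \<le> 750000 * L / r / 32" using f2 unfolding f3 f4 .
    have g2: "4 * sqrt (L / n) \<le> N * (p1 - p0) / 32" using g1 A by (rule order_trans)
    have g3: "1/2 + 4 * sqrt (L / n) \<le> 1/2 + N * (p1 - p0) / 32" using g2 by simp
    show ?thesis using g3 c2 by (rule order_trans)
  next
    assume c: "Y \<ge> 1/2 + (1/64) * min ((p1 - p0) * sqrt (N / (2 * p1))) (1/4)"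
    have Ln0: "L / n \<ge> 0" using L1 npos by simp
    have q1: "1/256 \<ge> 4 * sqrt (L / n)"
    proof -
      have "L / n \<le> 2 * r / r^2" unfolding r2[symmetric] using Lsq npos r2 unfolding r_def
        by (simp add: divide_right_mono)
      also have "2 * r / r^2 = 2 / r" using rpos by (simp add: power2_eq_square)
      also have "\<dots> \<le> 2 / 2^22" using rbig rpos by (intro divide_left_mono) auto
      finally have "L / n \<le> 2 / 2^22" .
      moreover have "(2::real) / 2^22 \<le> (1/1024)^2" by (simp add: power2_eq_square)
      ultimately have "L / n \<le> (1/1024)^2" by linarith
      then have "sqrt (L / n) \<le> sqrt ((1/1024)^2)" by (rule real_sqrt_le_mono)
      then have "sqrt (L / n) \<le> 1/1024" by simp
      then show ?thesis by simp
    qed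
    define X where "X = (p1 - p0) * sqrt (N / (2 * p1))"
    have X0: "X \<ge> 0" unfolding X_def using D0 N p1pos by simp
    have q2: "X \<ge> 256 * sqrt (L / n)"
    proof (rule sqrt_ge_from_sq[OF X0])
      show "0 \<le> 256 * sqrt (L / n)" using Ln0 by simp
      have cb: "(p1 - p0)^2 * N / p1 \<ge> 10^6 * L / (4 * n)"
        by (rule case2_bound[OF npos _ s s1n d _ _ HT1 HT3, folded p1_def p0_def]) (use L1 N in auto)
      have x1: "X^2 = (p1 - p0)^2 * (sqrt (N / (2 * p1)))^2" unfolding X_def by (simp only: power_mult_distrib)
      have x2: "(sqrt (N / (2 * p1)))^2 = N / (2 * p1)" using N p1pos by simp
      have "X^2 = (p1 - p0)^2 * N / p1 / 2" unfolding x1 x2 by simp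
      also have "\<dots> \<ge> 10^6 * L / (4 * n) / 2" using cb by (rule divide_right_mono) simp
      finally have "X^2 \<ge> 10^6 * L / (4 * n) / 2" .
      moreover have "(256 * sqrt (L / n))^2 = 65536 * (L / n)" using Ln0 by (simp add: power_mult_distrib)
      moreover have "65536 * (L / n) \<le> 10^6 * L / (4 * n) / 2" using L1 npos by (simp add: field_simps)
      ultimately show "(256 * sqrt (L / n))^2 \<le> X^2" by linarith
    qed
    have "(1/64) * min X (1/4) \<ge> 4 * sqrt (L / n)" using q1 q2 by (simp add: min_def)
    then show ?thesis using c unfolding X_def by linarith
  qed
qed

lemma ln_facts:
  fixes n :: nat assumes "n \<ge> 3"
  shows "ln (real n) \<ge> 1" "ln (real n) \<le> 2 * sqrt (real n)"
proof -
  have "ln (real n) \<ge> ln 3" using assms by simp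
  then show "ln (real n) \<ge> 1" using ln3_gt_1 by linarith
  have np: "real n > 0" using assms by simp
  have "ln (sqrt (real n)) \<le> sqrt (real n) - 1" using np by (intro ln_le_minus_one) simp
  moreover have "ln (sqrt (real n)) = ln (real n) / 2" using np by (simp add: ln_sqrt)
  ultimately show "ln (real n) \<le> 2 * sqrt (real n)" by linarith
qed

lemma phase_len_ge:
  assumes "h \<ge> 1" shows "real (phase_len m h * h) \<ge> real m"
proof -
  have hp: "real h > 0" using assms by simp
  have "real (phase_len m h) \<ge> real m / real h"
    unfolding phase_len_def by (simp add: of_nat_nat ceiling_le_iff)
  then have "real (phase_len m h) * real h \<ge> real m / real h * real h" using hp by (intro mult_right_mono) auto
  then show ?thesis using hp by simp
qed

lemma marginal_prob:
  assumes "i \<in> {1..n}"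
  shows "measure_pmf.prob (source_filter_pmf n \<delta> h R) {\<omega>. P (\<omega> i)} = measure_pmf.prob (agent_pmf n \<delta> h R) {c. P c}"
proof -
  have "measure_pmf.prob (source_filter_pmf n \<delta> h R) {\<omega>. P (\<omega> i)} =
        measure_pmf.prob (map_pmf (\<lambda>\<omega>. \<omega> i) (source_filter_pmf n \<delta> h R)) {c. P c}"
    by (simp add: vimage_def)
  also have "map_pmf (\<lambda>\<omega>. \<omega> i) (source_filter_pmf n \<delta> h R) = agent_pmf n \<delta> h R"
    unfolding source_filter_pmf_def using assms by (subst Pi_pmf_component) auto
  finally show ?thesis .
qed

lemma indep_Y:
  "prob_space.indep_vars (measure_pmf (source_filter_pmf n \<delta> h R))
     (\<lambda>_. count_space UNIV) (\<lambda>i \<omega>. weak_opinion S0 S1 h R (\<omega> i)) {1..n}"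
proof -
  have "prob_space.indep_vars (measure_pmf (source_filter_pmf n \<delta> h R))
     (\<lambda>_. count_space UNIV) (\<lambda>x f. f x) {1..n}"
    unfolding source_filter_pmf_def by (rule indep_vars_Pi_pmf) simp
  then show ?thesis
    by (rule prob_space.indep_vars_compose2[OF measure_pmf.prob_space_axioms]) simp
qed

theorem lemma28:
  shows "\<exists>c1::real > 0. \<exists>n0::nat. \<forall>n S0 S1 (\<delta>::real) h m.
    let s0 = card S0; s1 = card S1; s = real s1 - real s0; R = phase_len m h;
        Y = (\<lambda>i \<omega>. weak_opinion S0 S1 h R (\<omega> i))
    in (n \<ge> n0 \<and> S0 \<subseteq> {1..n} \<and> S1 \<subseteq> {1..n} \<and> S0 \<inter> S1 = {} \<and>
        4 * s0 \<le> n \<and> 4 * s1 \<le> n \<and> s1 > s0 \<and>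
        0 \<le> \<delta> \<and> \<delta> < 1/2 \<and> h \<ge> 1 \<and>
        real m \<ge> c1 * (real n * \<delta> * ln (real n) / (min (s^2) (real n) * (1 - 2*\<delta>)^2)
                        + sqrt (real n) * ln (real n) / s
                        + real (s0 + s1) * ln (real n) / s^2
                        + real h * ln (real n)))
       \<longrightarrow> (\<forall>i\<in>{1..n}. measure_pmf.prob (source_filter_pmf n \<delta> h R) {\<omega>. Y i \<omega>}
                           \<ge> 1/2 + 4 * sqrt (ln (real n) / real n))
         \<and> prob_space.indep_vars (measure_pmf (source_filter_pmf n \<delta> h R))
              (\<lambda>_. count_space UNIV) Y {1..n}"
  apply (rule exI[where x = "10^6"])
  apply (rule conjI, simp)
  apply (rule exI[where x = "2^44"])
  apply (unfold Let_def)
  apply (intro allI impI)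
  apply (elim conjE)
  apply (intro conjI ballI)
  subgoal premises H for n S0 S1 \<delta> h m i
  proof -
    note nge = H(1) and S0n = H(2) and S1n = H(3) and disj = H(4) and s0n = H(5) and s1n = H(6)
      and s01 = H(7) and d0 = H(8) and d1 = H(9) and h1 = H(10) and mb = H(11) and iin = H(12)
    define R where "R = phase_len m h"
    define N where "N = R * h"
    define s0 where "s0 = real (card S0)"
    define s1 where "s1 = real (card S1)"
    define s where "s = s1 - s0"
    define L where "L = ln (real n)"
    define p1 where "p1 = \<delta> + s1 * (1 - 2*\<delta>) / real n"
    define p0 where "p0 = \<delta> + s0 * (1 - 2*\<delta>) / real n"
    define Y where "Y = E2 N p1 p0 (\<lambda>u v. if u > v then 1 else if u < v then 0 else 1/2)"
    have "(3::nat) \<le> 2^44" by simp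
    then have n3: "n \<ge> 3" using nge by linarith
    have n1: "n \<ge> 1" using n3 by simp
    have npos: "real n > 0" using n1 by simp
    have L1: "L \<ge> 1" and Lsq: "L \<le> 2 * sqrt (real n)" unfolding L_def using ln_facts[OF n3] by auto
    have s1': "s \<ge> 1" unfolding s_def s0_def s1_def using s01 by simp
    have spos: "s > 0" using s1' by simp
    have s0nn: "s0 \<ge> 0" unfolding s0_def by simp
    have s1n': "4 * s1 \<le> real n" unfolding s1_def using s1n by simp
    have probY: "measure_pmf.prob (source_filter_pmf n \<delta> h R) {\<omega>. weak_opinion S0 S1 h R (\<omega> i)} = Y"
      unfolding marginal_prob[OF iin] Y_def N_def p1_def p0_def s1_def s0_def
      by (rule agent_prob[OF n1 d0 _ S0n S1n disj]) (use d1 in simp)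
    have NR: "real N \<ge> real m" unfolding N_def R_def using phase_len_ge[OF h1] by simp
    define T1 where "T1 = real n * \<delta> * L / (min (s^2) (real n) * (1 - 2*\<delta>)^2)"
    define T2 where "T2 = sqrt (real n) * L / s"
    define T3 where "T3 = (s0 + s1) * L / s^2"
    define T4 where "T4 = real h * L"
    have T1n: "T1 \<ge> 0" unfolding T1_def using d0 L1 npos by (intro divide_nonneg_nonneg mult_nonneg_nonneg) auto
    have T2n: "T2 \<ge> 0" unfolding T2_def using L1 spos by simp
    have T3n: "T3 \<ge> 0" unfolding T3_def using L1 s0nn s1n' unfolding s1_def by simp
    have T4n: "T4 \<ge> 1"
    proof -
      have "real h * 1 \<le> real h * L" using L1 by (intro mult_left_mono) auto
      moreover have "real h \<ge> 1" using h1 by simp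
      ultimately show ?thesis unfolding T4_def by linarith
    qed
    have mb': "real m \<ge> 10^6 * (T1 + T2 + T3 + T4)"
      using mb unfolding T1_def T2_def T3_def T4_def L_def s_def s0_def s1_def by simp
    have dist: "10^6 * (T1 + T2 + T3 + T4) = 10^6 * T1 + 10^6 * T2 + 10^6 * T3 + 10^6 * T4" by (simp add: algebra_simps)
    have c6: "(10::real)^6 = 1000000" by simp
    have HT1: "real N \<ge> 10^6 * T1" using mb' dist NR T2n T3n T4n unfolding c6 by linarith
    have HT2: "real N \<ge> 10^6 * T2" using mb' dist NR T1n T3n T4n unfolding c6 by linarith
    have HT3: "real N \<ge> 10^6 * T3" using mb' dist NR T1n T2n T4n unfolding c6 by linarith
    have N1: "real N \<ge> 1" using mb' dist NR T1n T2n T3n T4n unfolding c6 by linarith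
    have p0nn: "0 \<le> p0" unfolding p0_def using d0 d1 s0nn npos by simp
    have p01: "p0 < p1"
    proof -
      have "s0 * (1 - 2*\<delta>) < s1 * (1 - 2*\<delta>)" using s01 d1 unfolding s0_def s1_def by simp
      then have "s0 * (1 - 2*\<delta>) / real n < s1 * (1 - 2*\<delta>) / real n" using npos by (simp add: divide_strict_right_mono)
      then show ?thesis unfolding p0_def p1_def by simp
    qed
    have p1h: "p1 \<le> 1/2"
    proof -
      have "s1 * (1 - 2*\<delta>) \<le> (real n / 4) * (1 - 2*\<delta>)" using s1n' d1 by (intro mult_right_mono) auto
      then have "s1 * (1 - 2*\<delta>) / real n \<le> (real n / 4) * (1 - 2*\<delta>) / real n" using npos by (intro divide_right_mono) auto
      also have "\<dots> = (1 - 2*\<delta>) / 4" using npos by simp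
      finally have "s1 * (1 - 2*\<delta>) / real n \<le> (1 - 2*\<delta>) / 4" .
      moreover have "(1 - 2*\<delta>) / 4 = 1/4 - \<delta>/2" by simp
      ultimately show ?thesis unfolding p1_def using d0 d1 by linarith
    qed
    have core': "(real N * p1 < 1/8 \<and> Y \<ge> 1/2 + real N * (p1 - p0) / 32) \<or>
         Y \<ge> 1/2 + (1/64) * min ((p1 - p0) * sqrt (real N / (2 * p1))) (1/4)"
      unfolding Y_def by (rule core[OF p0nn p01 p1h])
    have nge': "real n \<ge> 2^44" using nge by (metis of_nat_le_iff of_nat_numeral of_nat_power)
    have fin: "Y \<ge> 1/2 + 4 * sqrt (L / real n)"
      by (rule final_arith[OF nge' L1 Lsq s1' s_def s0nn s1n' d0 d1 N1 HT1[unfolded T1_def] HT2[unfolded T2_def]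
            HT3[unfolded T3_def], folded p1_def p0_def, OF core'])
    show ?thesis using probY fin unfolding R_def L_def by simp
  qed
  subgoal by (rule indep_Y)
  done


end
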